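(* Let $G$ be a finite additive abelian group of order $v$ and suppose there exists a difference family DF$(v,k,\lambda)$ over $G$ (with $2\le k\le v$). Then there exists an authentication system with $k$ source states, $v$ messages and $b=\lambda v(v-1)/(k^2-k)$ encoding rules which, when the source states are equiprobable and the encoding rules are used with equal probability, has perfect secrecy and is onefold secure against spoofing. Moreover, the system is optimal (i.e. $b=v(v-1)/(k(k-1))$) if and only if $\lambda=1$.
   Context: A difference family DF$(v,k,\lambda)$ over an additive abelian group $G$ of order $v$ is a family $\{D_1,\dots,D_l\}$ of $k$-subsets of $G$ such that the multiset $\bigcup_{i=1}^l\{x-y: x,y\in D_i,\ x\ne y\}$ contains every nonzero element of $G$ exactly $\lambda$ times. Authentication system: finite sets $\mathcal{S}$ of $k$ source states, $\mathcal{M}$ of $v$ messages, $\mathcal{E}$ of $b$ encoding rules, each $e\in\mathcal{E}$ an injective map $\mathcal{S}\to\mathcal{M}$; $M(e)=\{e(s):s\in\mathcal{S}\}$ is the set of messages valid (accepted) under $e$. A key $e$ is drawn according to a distribution $p_E$ on $\mathcal{E}$, source states according to $p_S$, independently; "equiprobable source states" means source states are independent and uniformly distributed, and for each $i$ every $i$-subset of distinct source states is equally likely to be the set of sent source states. Perfect secrecy: $p_S(s\mid m)=p_S(s)$ for every $s\in\mathcal{S}$ and every message $m$. Spoofing attack of order $i$: the opponent observes $i\ge 0$ distinct messages produced from $i$ distinct source states under the same secret key $e$, and then sends a new message distinct from these; he succeeds if it lies in $M(e)$. The deception probability $P_{d_i}$ is the maximum success probability over all opponent strategies. The system is called $t$-fold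 secure against spoofing if $P_{d_i}=(k-i)/(v-i)$ for all $0\le i\le t$. A onefold secure system always has $b\ge \binom{v}{2}/\binom{k}{2}$; it is called optimal when equality holds. *)

theory Defs
  imports Complex_Main
begin

text \<open>A difference family DF(v,k,lambda) over a finite additive abelian group G
  (here: the finite type 'g, so v = card (UNIV :: 'g set)) is a nonempty family (list, so that
  repeated base blocks are allowed) D_1,...,D_l of k-subsets such that every nonzero
  element g occurs exactly lambda times as a difference x - y, x,y in D_i, x ~= y,
  counted with multiplicity over all blocks.\<close>

definition difference_family ::
  "'g::{ab_group_add,finite} set list \<Rightarrow> nat \<Rightarrow> nat \<Rightarrow> nat \<Rightarrow> bool" where
  "difference_family Ds v k lam \<longleftrightarrow>
     v = card (UNIV :: 'g set) \<and> Ds \<noteq> [] \<and>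
     (\<forall>D\<in>set Ds. card D = k) \<and>
     (\<forall>g::'g. g \<noteq> 0 \<longrightarrow>
        (\<Sum>D\<leftarrow>Ds. card {(x, y). x \<in> D \<and> y \<in> D \<and> x \<noteq> y \<and> x - y = g}) = lam)"

definition auth_system :: "'s set \<Rightarrow> 'm set \<Rightarrow> 'e set \<Rightarrow> ('e \<Rightarrow> 's \<Rightarrow> 'm) \<Rightarrow> bool" where
  "auth_system S M E f \<longleftrightarrow> finite S \<and> finite M \<and> finite E \<and>
     (\<forall>e\<in>E. f e ` S \<subseteq> M \<and> inj_on (f e) S)"

definition valid_msgs :: "'s set \<Rightarrow> ('e \<Rightarrow> 's \<Rightarrow> 'm) \<Rightarrow> 'e \<Rightarrow> 'm set" where
  "valid_msgs S f e = f e ` S"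

text \<open>Joint probability that source state s is sent and message m is produced
  (source and key drawn independently according to pS, pE).\<close>
definition joint_prob ::
  "'s set \<Rightarrow> 'e set \<Rightarrow> ('e \<Rightarrow> 's \<Rightarrow> 'm) \<Rightarrow> ('s \<Rightarrow> real) \<Rightarrow> ('e \<Rightarrow> real) \<Rightarrow> 's \<Rightarrow> 'm \<Rightarrow> real" where
  "joint_prob S E f pS pE s m = pS s * (\<Sum>e\<in>{e\<in>E. f e s = m}. pE e)"

definition msg_prob ::
  "'s set \<Rightarrow> 'e set \<Rightarrow> ('e \<Rightarrow> 's \<Rightarrow> 'm) \<Rightarrow> ('s \<Rightarrow> real) \<Rightarrow> ('e \<Rightarrow> real) \<Rightarrow> 'm \<Rightarrow> real" where
  "msg_prob S E f pS pE m = (\<Sum>s\<in>S. joint_prob S E f pS pE s m)"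

definition perfect_secrecy ::
  "'s set \<Rightarrow> 'm set \<Rightarrow> 'e set \<Rightarrow> ('e \<Rightarrow> 's \<Rightarrow> 'm) \<Rightarrow> ('s \<Rightarrow> real) \<Rightarrow> ('e \<Rightarrow> real) \<Rightarrow> bool" where
  "perfect_secrecy S M E f pS pE \<longleftrightarrow>
     (\<forall>s\<in>S. \<forall>m\<in>M. msg_prob S E f pS pE m > 0 \<longrightarrow>
        joint_prob S E f pS pE s m / msg_prob S E f pS pE m = pS s)"

text \<open>Spoofing attack of order i with equiprobable source states: the key e is
  drawn according to pE, the set T of i distinct sent source states is uniformly
  distributed among the i-subsets of S; the opponent observes the messages f e ` T
  and, using a strategy sigma, sends sigma (f e ` T), a message of M not among the
  observed ones. He succeeds iff it lies in M(e).\<close>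

definition spoof_strategies :: "'m set \<Rightarrow> nat \<Rightarrow> ('m set \<Rightarrow> 'm) set" where
  "spoof_strategies M i = {\<sigma>. \<forall>X. X \<subseteq> M \<and> card X = i \<longrightarrow> \<sigma> X \<in> M - X}"

definition spoof_success ::
  "'s set \<Rightarrow> 'e set \<Rightarrow> ('e \<Rightarrow> 's \<Rightarrow> 'm) \<Rightarrow> ('e \<Rightarrow> real) \<Rightarrow> nat \<Rightarrow> ('m set \<Rightarrow> 'm) \<Rightarrow> real" where
  "spoof_success S E f pE i \<sigma> =
     (\<Sum>e\<in>E. pE e * (\<Sum>T\<in>{T. T \<subseteq> S \<and> card T = i}.
        (1 / real (card S choose i)) *
        (if \<sigma> (f e ` T) \<in> valid_msgs S f e then 1 else 0)))"

definition deception_prob ::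
  "'s set \<Rightarrow> 'm set \<Rightarrow> 'e set \<Rightarrow> ('e \<Rightarrow> 's \<Rightarrow> 'm) \<Rightarrow> ('e \<Rightarrow> real) \<Rightarrow> nat \<Rightarrow> real" where
  "deception_prob S M E f pE i = (SUP \<sigma>\<in>spoof_strategies M i. spoof_success S E f pE i \<sigma>)"

definition t_fold_secure ::
  "'s set \<Rightarrow> 'm set \<Rightarrow> 'e set \<Rightarrow> ('e \<Rightarrow> 's \<Rightarrow> 'm) \<Rightarrow> ('e \<Rightarrow> real) \<Rightarrow> nat \<Rightarrow> bool" where
  "t_fold_secure S M E f pE t \<longleftrightarrow>
     (\<forall>i\<le>t. deception_prob S M E f pE i =
        (real (card S) - real i) / (real (card M) - real i))"

definition optimal_auth :: "'s set \<Rightarrow> 'm set \<Rightarrow> 'e set \<Rightarrow> bool" where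
  "optimal_auth S M E \<longleftrightarrow>
     real (card E) = real (card M choose 2) / real (card S choose 2)"

end

theory Submission
  imports Defs
begin

lemma sum_shift:
  fixes h :: "'g::{ab_group_add,finite} \<Rightarrow> 'b::comm_monoid_add"
  shows "(\<Sum>x\<in>UNIV. h (x - a)) = (\<Sum>x\<in>UNIV. h x)"
  by (rule sum.reindex_bij_witness[where i="\<lambda>x. x + a" and j="\<lambda>x. x - a"]) auto

lemma c_shift:
  fixes D :: "'g::ab_group_add set"
  assumes "t \<noteq> 0"
  shows "card {(x,y). x\<in>D \<and> y\<in>D \<and> x\<noteq>y \<and> x-y=t} = card {a\<in>D. a+t\<in>D}"
proof -
  have "{(x,y). x\<in>D \<and> y\<in>D \<and> x\<noteq>y \<and> x-y=t} = (\<lambda>a. (a+t,a)) ` {a\<in>D. a+t\<in>D}"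
    using assms by (auto simp: image_def algebra_simps)
  moreover have "inj_on (\<lambda>a. (a+t,a)) {a\<in>D. a+t\<in>D}" by (auto simp: inj_on_def)
  ultimately show ?thesis by (simp add: card_image)
qed

lemma c_total:
  fixes D :: "'g::{ab_group_add,finite} set"
  shows "(\<Sum>g\<in>UNIV-{0}. card {(x,y). x\<in>D \<and> y\<in>D \<and> x\<noteq>y \<and> x-y=g}) = card D * (card D - 1)"
proof -
  define P where "P = {(x,y). x\<in>D \<and> y\<in>D \<and> x\<noteq>y}"
  have "(\<Sum>g\<in>UNIV-{0}. sum (\<lambda>_. 1::nat) {p\<in>P. (\<lambda>(x,y). x-y) p = g}) = sum (\<lambda>_. 1) P"
    by (rule sum.group) (auto simp: P_def)
  moreover have "\<And>g. {p\<in>P. (\<lambda>(x,y). x-y) p = g} = {(x,y). x\<in>D \<and> y\<in>D \<and> x\<noteq>y \<and> x-y=g}"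
    by (auto simp: P_def)
  moreover have "P = D \<times> D - (\<lambda>x. (x,x)) ` D" by (auto simp: P_def)
  hence "card P = card D * card D - card D"
    by (simp add: card_Diff_subset card_image inj_on_def card_cartesian_product subset_eq)
  ultimately show ?thesis by (simp add: diff_mult_distrib2)
qed

lemma real_choose2: "real (n choose 2) = real n * (real n - 1) / 2"
proof -
  have "even (n * (n - 1))" by auto
  hence "real (n * (n - 1) div 2) = real (n * (n - 1)) / 2" by (simp add: real_of_nat_div)
  moreover have "real (n * (n - 1)) = real n * (real n - 1)" by (cases n) (auto simp: algebra_simps)
  ultimately show ?thesis by (simp add: choose_two)
qed


lemma sum_refl:
  fixes D :: "'g::{ab_group_add,finite} set"
  shows "(\<Sum>g\<in>UNIV. if x - g \<in> D then 1 else 0 :: real) = real (card D)"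
proof -
  have "(\<Sum>g\<in>UNIV. if x - g \<in> D then 1 else 0 :: real) = (\<Sum>g\<in>UNIV. if g \<in> D then 1 else 0 :: real)"
    by (rule sum.reindex_bij_witness[where i="\<lambda>g. x - g" and j="\<lambda>g. x - g"]) auto
  also have "\<dots> = real (card D)"
    using sum.inter_filter[of UNIV "\<lambda>_. 1::real" "\<lambda>g. g \<in> D"] by simp
  finally show ?thesis .
qed

lemma sum_cnt:
  fixes D :: "'g::{ab_group_add,finite} set"
  shows "(\<Sum>a\<in>D. if a + t \<in> D then 1 else 0 :: real) = real (card {a\<in>D. a + t \<in> D})"
  using sum.inter_filter[of D "\<lambda>_. 1::real" "\<lambda>a. a + t \<in> D"] by simp

theorem mainTheorem3:
  fixes Ds :: "'g::{ab_group_add,finite} set list"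
    and v k lam :: nat
  assumes "difference_family Ds v k lam"
    and "2 \<le> k" and "k \<le> v"
  shows "\<exists>(S::nat set) (M::nat set) (E::nat set) (f::nat \<Rightarrow> nat \<Rightarrow> nat).
           auth_system S M E f \<and>
           card S = k \<and> card M = v \<and>
           real (card E) = real lam * real v * (real v - 1) / (real k ^ 2 - real k) \<and>
           perfect_secrecy S M E f (\<lambda>s. 1 / real (card S)) (\<lambda>e. 1 / real (card E)) \<and>
           t_fold_secure S M E f (\<lambda>e. 1 / real (card E)) 1 \<and>
           (optimal_auth S M E \<longleftrightarrow> lam = 1)"
proof -
  define l where "l = length Ds"
  define c where "c = (\<lambda>D (g::'g). card {(x, y). x \<in> D \<and> y \<in> D \<and> x \<noteq> y \<and> x - y = g})"
  have v: "v = card (UNIV::'g set)" and lpos: "l > 0" and cardD: "\<forall>i<l. card (Ds!i) = k"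
    using assms(1) unfolding difference_family_def l_def by auto
  have dfc: "(\<Sum>i<l. c (Ds!i) g) = lam" if "g \<noteq> 0" for g
  proof -
    have "(\<Sum>D\<leftarrow>Ds. c D g) = lam" using assms(1) that unfolding difference_family_def c_def by auto
    moreover have "(\<Sum>D\<leftarrow>Ds. c D g) = (\<Sum>i<l. c (Ds!i) g)"
      by (simp add: sum_list_sum_nth l_def atLeast0LessThan)
    ultimately show ?thesis by simp
  qed
  have vpos: "v > 1" using assms by simp
  have count: "l * (k * (k - 1)) = (v - 1) * lam"
  proof -
    have "(\<Sum>g\<in>UNIV-{0::'g}. (\<Sum>i<l. c (Ds!i) g)) = (\<Sum>g\<in>UNIV-{0::'g}. lam)"
      by (rule sum.cong) (auto simp: dfc)
    also have "\<dots> = (v - 1) * lam" by (simp add: v card_Diff_subset)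
    finally have "(\<Sum>i<l. \<Sum>g\<in>UNIV-{0::'g}. c (Ds!i) g) = (v - 1) * lam"
      by (simp add: sum.swap[of _ "UNIV-{0}"])
    moreover have "(\<Sum>g\<in>UNIV-{0::'g}. c (Ds!i) g) = k * (k - 1)" if "i < l" for i
      using c_total[of "Ds!i"] cardD that by (simp add: c_def)
    ultimately show ?thesis by simp
  qed
  obtain \<phi> :: "'g \<Rightarrow> nat" where phi: "bij_betw \<phi> UNIV {0..<v}"
    using ex_bij_betw_finite_nat[of "UNIV::'g set"] v by auto
  have "\<forall>i. \<exists>h. i < l \<longrightarrow> bij_betw h {0..<k} (Ds!i)"
    using ex_bij_betw_nat_finite cardD by (metis finite)
  then obtain d where d: "\<And>i. i < l \<Longrightarrow> bij_betw (d i) {0..<k} (Ds!i)"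
    by metis
  define \<psi> where "\<psi> = inv \<phi>"
  have inj_phi: "inj \<phi>" using phi bij_betw_imp_inj_on by blast
  have psi_phi[simp]: "\<psi> (\<phi> g) = g" for g by (simp add: \<psi>_def inj_phi)
  have phi_lt[simp]: "\<phi> g < v" for g using phi bij_betwE by fastforce
  have phi_eq[simp]: "\<phi> x = \<phi> y \<longleftrightarrow> x = y" for x y using inj_phi by (auto simp: inj_def)
  define enc where "enc = (\<lambda>(i::nat, g). i * v + \<phi> g)"
  have enc_div[simp]: "enc (i, g) div v = i" for i g using vpos by (simp add: enc_def)
  have enc_mod[simp]: "enc (i, g) mod v = \<phi> g" for i g using vpos by (simp add: enc_def)
  define E where "E = enc ` ({..<l} \<times> UNIV)"
  define f where "f = (\<lambda>e s. \<phi> (d (e div v) s + \<psi> (e mod v)))"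
  define S where "S = {0..<k}"
  define M where "M = {0..<v}"
  have f_enc[simp]: "f (enc (i, g)) s = \<phi> (d i s + g)" for i g s by (simp add: f_def)
  have inj_enc: "inj_on enc ({..<l} \<times> UNIV)"
    by (rule inj_onI) (metis enc_div enc_mod phi_eq prod.collapse)
  have sumE: "sum h E = (\<Sum>i<l. \<Sum>g\<in>UNIV. h (enc (i, g)))" for h :: "nat \<Rightarrow> real"
    by (simp add: E_def sum.reindex[OF inj_enc] sum.cartesian_product)
  have cardE: "card E = l * v" using inj_enc by (simp add: E_def card_image card_cartesian_product v)
  have finE: "finite E" by (simp add: E_def)
  have countR: "real l * (real k * (real k - 1)) = (real v - 1) * real lam"
  proof -
    have "real (l * (k * (k - 1))) = real ((v - 1) * lam)" using count by metis
    thus ?thesis using assms vpos by (simp add: of_nat_diff)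
  qed
  have kpos: "real k > 1" and vgt: "real v > 1" and lposR: "real l > 0" using assms vpos lpos by auto
  have cardS: "card S = k" and cardM: "card M = v" by (simp_all add: S_def M_def)
  have M_range: "M = range \<phi>" using phi by (simp add: M_def bij_betw_def)
  have memb: "(\<phi> x \<in> f (enc (i, g)) ` S) = (x - g \<in> Ds!i)" if "i < l" for i g x
  proof -
    have "(\<phi> x \<in> f (enc (i, g)) ` S) = (x \<in> (\<lambda>s. d i s + g) ` S)" by auto
    also have "\<dots> = (x - g \<in> d i ` S)" by (force simp: algebra_simps)
    also have "d i ` S = Ds!i" using d[OF that] by (simp add: S_def bij_betw_def)
    finally show ?thesis .
  qed
  have auth: "auth_system S M E f"
    unfolding auth_system_def
  proof (intro conjI ballI)
    fix e assume "e \<in> E"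
    then obtain i g where ig: "i < l" "e = enc (i, g)" by (auto simp: E_def)
    show "f e ` S \<subseteq> M" by (auto simp: M_def f_def)
    have "inj_on (d i) S" using d[OF ig(1)] by (simp add: S_def bij_betw_def)
    thus "inj_on (f e) S" using ig by (auto simp: inj_on_def)
  qed (auto simp: S_def M_def finE)
  have cardE_eq: "real (card E) = real lam * real v * (real v - 1) / (real k ^ 2 - real k)"
  proof -
    have "real k ^ 2 - real k = real k * (real k - 1)" by (simp add: power2_eq_square algebra_simps)
    moreover have "real k * (real k - 1) > 0" using kpos by simp
    moreover have "real l * real v * (real k * (real k - 1)) = real lam * real v * (real v - 1)"
      using countR by (metis mult.commute mult.left_commute)
    ultimately show ?thesis using cardE assms(2) by (simp add: eq_divide_eq)
  qed
  have bpos: "real (card E) > 0" using cardE lpos vpos by simp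
  have keycount: "(\<Sum>e\<in>{e\<in>E. f e s = m}. 1 / real (card E)) = real l / real (card E)"
    if mM: "m \<in> M" for s m
  proof -
    obtain x where x: "m = \<phi> x" using mM M_range by auto
    have "(\<Sum>e\<in>{e\<in>E. f e s = m}. 1 / real (card E))
        = (\<Sum>e\<in>E. if f e s = m then 1 / real (card E) else 0)"
      using sum.inter_filter[OF finE, of "\<lambda>_. 1 / real (card E)" "\<lambda>e. f e s = m"] by simp
    also have "\<dots> = (\<Sum>i<l. \<Sum>g\<in>UNIV. if g = x - d i s then 1 / real (card E) else 0)"
      unfolding sumE x by (intro sum.cong refl) (auto simp: algebra_simps)
    also have "\<dots> = real l / real (card E)" by simp
    finally show ?thesis .
  qed
  have kc: "card {e\<in>E. f e s = m} = l" if mM: "m \<in> M" for s m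
    using keycount[OF mM, of s] bpos by simp
  have secrecy: "perfect_secrecy S M E f (\<lambda>s. 1 / real (card S)) (\<lambda>e. 1 / real (card E))"
    unfolding perfect_secrecy_def
  proof (intro ballI impI)
    fix s m assume s: "s \<in> S" and m: "m \<in> M"
    have j: "joint_prob S E f (\<lambda>s. 1 / real (card S)) (\<lambda>e. 1 / real (card E)) s' m
       = 1 / real k * (real l / real (card E))" for s'
      by (simp add: joint_prob_def kc[OF m] cardS)
    have "msg_prob S E f (\<lambda>s. 1 / real (card S)) (\<lambda>e. 1 / real (card E)) m = real l / real (card E)"
      using assms(2) unfolding msg_prob_def j by (simp add: cardS)
    then show j2: "joint_prob S E f (\<lambda>s. 1 / real (card S)) (\<lambda>e. 1 / real (card E)) s m /
          msg_prob S E f (\<lambda>s. 1 / real (card S)) (\<lambda>e. 1 / real (card E)) m =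
          1 / real (card S)"
      using lposR bpos unfolding j by (simp add: cardS)
  qed
  have b_eq: "real (card E) = real l * real v" using cardE by simp
  have spoof0: "spoof_success S E f (\<lambda>e. 1 / real (card E)) 0 \<sigma> = real k / real v"
    if \<sigma>: "\<sigma> \<in> spoof_strategies M 0" for \<sigma>
  proof -
    have "\<sigma> {} \<in> M" using \<sigma> by (auto simp: spoof_strategies_def)
    then obtain x where x: "\<sigma> {} = \<phi> x" using M_range by auto
    have T0: "{T. T \<subseteq> S \<and> card T = 0} = {{}}"
      by (auto simp: S_def) (metis card_0_eq empty_iff finite_atLeastLessThan finite_subset)
    have "spoof_success S E f (\<lambda>e. 1 / real (card E)) 0 \<sigma>
        = (\<Sum>e\<in>E. 1 / real (card E) * (if \<phi> x \<in> f e ` S then 1 else 0))"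
      by (simp add: spoof_success_def T0 valid_msgs_def x)
    also have "\<dots> = (\<Sum>i<l. \<Sum>g\<in>UNIV. 1 / real (card E) * (if x - g \<in> Ds!i then 1 else 0))"
      unfolding sumE by (intro sum.cong refl) (simp add: memb del: f_enc)
    also have "\<dots> = (\<Sum>i<l. 1 / real (card E) * real k)"
      by (intro sum.cong refl) (simp only: sum_distrib_left[symmetric] sum_refl cardD, simp add: cardD)
    also have "\<dots> = real k / real v" using lposR b_eq by simp
    finally show ?thesis .
  qed
  have phi_psi: "\<phi> (\<psi> m) = m" if "m \<in> M" for m
    using that M_range by (auto simp: \<psi>_def f_inv_into_f)
  have spoof1: "spoof_success S E f (\<lambda>e. 1 / real (card E)) 1 \<sigma> = (real k - 1) / (real v - 1)"
    if \<sigma>: "\<sigma> \<in> spoof_strategies M 1" for \<sigma>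
  proof -
    define \<tau> where "\<tau> x = \<psi> (\<sigma> {\<phi> x})" for x
    have \<sigma>x: "\<sigma> {\<phi> x} \<in> M - {\<phi> x}" for x
    proof -
      have "{\<phi> x} \<subseteq> M \<and> card {\<phi> x} = 1" using M_range by auto
      thus ?thesis using \<sigma> unfolding spoof_strategies_def by blast
    qed
    have tau1: "\<sigma> {\<phi> x} = \<phi> (\<tau> x)" for x using \<sigma>x[of x] phi_psi by (simp add: \<tau>_def)
    have tau2: "\<tau> x \<noteq> x" for x using \<sigma>x[of x] tau1[of x] by auto
    have T1: "{T. T \<subseteq> S \<and> card T = 1} = (\<lambda>s. {s}) ` S"
      by (auto simp: card_1_singleton_iff)
    have inner: "(\<Sum>T\<in>{T. T \<subseteq> S \<and> card T = 1}. 1 / real (card S choose 1) *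
          (if \<sigma> (f e ` T) \<in> valid_msgs S f e then 1 else 0))
       = (\<Sum>s\<in>S. 1 / real k * (if \<sigma> {f e s} \<in> f e ` S then 1 else 0))" for e
      unfolding T1 by (subst sum.reindex) (auto simp: inj_on_def cardS valid_msgs_def)
    have step: "(\<sigma> {f (enc (i, g)) s} \<in> f (enc (i, g)) ` S) = (\<tau> (d i s + g) - g \<in> Ds!i)"
      if "i < l" for i g s
    proof -
      have "\<sigma> {f (enc (i, g)) s} = \<phi> (\<tau> (d i s + g))" by (simp add: tau1)
      thus ?thesis using memb[OF that] by simp
    qed
    have shift: "(\<Sum>g\<in>UNIV. if \<tau> (d i s + g) - g \<in> Ds!i then 1 else 0 :: real)
          = (\<Sum>x\<in>UNIV. if d i s + (\<tau> x - x) \<in> Ds!i then 1 else 0 :: real)" for i s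
    proof -
      have "(\<Sum>g\<in>UNIV. if \<tau> (d i s + g) - g \<in> Ds!i then 1 else 0 :: real)
          = (\<Sum>x\<in>UNIV. if \<tau> (d i s + (x - d i s)) - (x - d i s) \<in> Ds!i then 1 else 0 :: real)"
        by (rule sum_shift[symmetric])
      also have "\<dots> = (\<Sum>x\<in>UNIV. if d i s + (\<tau> x - x) \<in> Ds!i then 1 else 0 :: real)"
        by (intro sum.cong refl) (simp add: algebra_simps)
      finally show ?thesis .
    qed
    define Q where "Q = (\<Sum>i<l. \<Sum>g\<in>UNIV. \<Sum>s\<in>S. if \<tau> (d i s + g) - g \<in> Ds!i then 1 else 0 :: real)"
    have "spoof_success S E f (\<lambda>e. 1 / real (card E)) 1 \<sigma>
        = (\<Sum>e\<in>E. 1 / real (card E) * (\<Sum>s\<in>S. 1 / real k * (if \<sigma> {f e s} \<in> f e ` S then 1 else 0)))"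
      unfolding spoof_success_def inner ..
    also have "\<dots> = (\<Sum>i<l. \<Sum>g\<in>UNIV. 1 / real (card E) * (\<Sum>s\<in>S. 1 / real k *
             (if \<tau> (d i s + g) - g \<in> Ds!i then 1 else 0)))"
      unfolding sumE by (intro sum.cong refl) (simp add: step del: f_enc)
    also have "\<dots> = Q / (real (card E) * real k)"
      by (simp add: Q_def sum_distrib_left sum_divide_distrib)
    finally have succ: "spoof_success S E f (\<lambda>e. 1 / real (card E)) 1 \<sigma> = Q / (real (card E) * real k)" .
    have "Q = (\<Sum>i<l. \<Sum>s\<in>S. \<Sum>g\<in>UNIV. if \<tau> (d i s + g) - g \<in> Ds!i then 1 else 0 :: real)"
      unfolding Q_def by (rule sum.cong[OF refl], rule sum.swap)
    also have "\<dots> = (\<Sum>i<l. \<Sum>s\<in>S. \<Sum>x\<in>UNIV. if d i s + (\<tau> x - x) \<in> Ds!i then 1 else 0 :: real)"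
      by (rule sum.cong[OF refl], rule sum.cong[OF refl], rule shift)
    also have "\<dots> = (\<Sum>i<l. \<Sum>x\<in>UNIV. \<Sum>s\<in>S. if d i s + (\<tau> x - x) \<in> Ds!i then 1 else 0 :: real)"
      by (rule sum.cong[OF refl], rule sum.swap)
    also have "\<dots> = (\<Sum>x\<in>UNIV. \<Sum>i<l. \<Sum>s\<in>S. if d i s + (\<tau> x - x) \<in> Ds!i then 1 else 0 :: real)"
      by (rule sum.swap)
    also have "\<dots> = (\<Sum>x::'g\<in>UNIV. real lam)"
    proof (rule sum.cong[OF refl])
      fix x :: 'g
      have "(\<Sum>s\<in>S. if d i s + (\<tau> x - x) \<in> Ds!i then 1 else 0 :: real) = real (c (Ds!i) (\<tau> x - x))"
        if il: "i < l" for i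
      proof -
        have "(\<Sum>s\<in>S. if d i s + (\<tau> x - x) \<in> Ds!i then 1 else 0 :: real)
            = (\<Sum>a\<in>Ds!i. if a + (\<tau> x - x) \<in> Ds!i then 1 else 0 :: real)"
          using d[OF il] unfolding S_def by (rule sum.reindex_bij_betw)
        also have "\<dots> = real (c (Ds!i) (\<tau> x - x))"
          unfolding sum_cnt c_def using tau2[of x] by (simp add: c_shift)
        finally show ?thesis .
      qed
      hence "(\<Sum>i<l. \<Sum>s\<in>S. if d i s + (\<tau> x - x) \<in> Ds!i then 1 else 0 :: real)
           = real (\<Sum>i<l. c (Ds!i) (\<tau> x - x))" by simp
      also have "\<dots> = real lam" using tau2[of x] by (simp add: dfc)
      finally show "(\<Sum>i<l. \<Sum>s\<in>S. if d i s + (\<tau> x - x) \<in> Ds!i then 1 else 0 :: real) = real lam" .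
    qed
    also have "\<dots> = real v * real lam" by (simp add: v)
    finally have Qeq: "Q = real v * real lam" .
    have "real lam * (real k - 1) = real lam * (real k - 1)" ..
    have e1: "real v * real lam * (real v - 1) = (real k - 1) * (real l * real v * real k)"
      using arg_cong[OF countR, of "\<lambda>z. real v * z"] by (simp add: algebra_simps)
    have "Q / (real (card E) * real k) = (real k - 1) / (real v - 1)"
      unfolding Qeq b_eq using e1 kpos vgt lposR by (simp add: frac_eq_eq)
    with succ show ?thesis by simp
  qed
  have nonempty: "spoof_strategies M i \<noteq> {}" if "i \<le> 1" for i
  proof -
    have "M - X \<noteq> {}" if "X \<subseteq> M" "card X = i" for X
    proof -
      have "finite X" using that finite_subset by (auto simp: M_def)
      hence "card (M - X) = v - i" using that by (simp add: card_Diff_subset cardM)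
      moreover have "v - i > 0" using \<open>i \<le> 1\<close> vpos by auto
      ultimately show ?thesis by (metis card.empty less_irrefl)
    qed
    hence "(\<lambda>X. SOME m. m \<in> M - X) \<in> spoof_strategies M i"
      unfolding spoof_strategies_def
    proof (intro CollectI allI impI)
      fix X assume "X \<subseteq> M \<and> card X = i"
      hence "\<exists>m. m \<in> M - X" using \<open>\<And>X. X \<subseteq> M \<Longrightarrow> card X = i \<Longrightarrow> M - X \<noteq> {}\<close> by blast
      thus "(SOME m. m \<in> M - X) \<in> M - X" by (rule someI_ex)
    qed
    thus ?thesis by blast
  qed
  have secure: "t_fold_secure S M E f (\<lambda>e. 1 / real (card E)) 1"
    unfolding t_fold_secure_def
  proof (intro allI impI)
    fix i :: nat assume i: "i \<le> 1"
    show "deception_prob S M E f (\<lambda>e. 1 / real (card E)) i =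
          (real (card S) - real i) / (real (card M) - real i)"
    proof (cases "i = 0")
      case True
      have "deception_prob S M E f (\<lambda>e. 1 / real (card E)) i = (SUP \<sigma>\<in>spoof_strategies M 0. real k / real v)"
        unfolding deception_prob_def True by (rule SUP_cong) (auto simp: spoof0)
      also have "\<dots> = real k / real v" using nonempty[of 0] by (simp add: cSUP_const)
      finally show ?thesis using True by (simp add: cardS cardM)
    next
      case False
      hence i1: "i = 1" using i by simp
      have "deception_prob S M E f (\<lambda>e. 1 / real (card E)) i
          = (SUP \<sigma>\<in>spoof_strategies M 1. (real k - 1) / (real v - 1))"
        unfolding deception_prob_def i1 by (rule SUP_cong[OF refl], rule spoof1)
      also have "\<dots> = (real k - 1) / (real v - 1)" using nonempty[of 1] by (simp add: cSUP_const)
      finally show ?thesis using i1 by (simp add: cardS cardM)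
    qed
  qed
  have opt: "optimal_auth S M E \<longleftrightarrow> lam = 1"
  proof -
    define P where "P = real v * (real v - 1)"
    define K where "K = real k * (real k - 1)"
    have P: "P > 0" using vgt by (simp add: P_def)
    have K: "K > 0" using kpos by (simp add: K_def)
    have cE: "real (card E) = real lam * P / K"
      unfolding cardE_eq P_def K_def by (simp add: power2_eq_square algebra_simps)
    have "optimal_auth S M E \<longleftrightarrow> real lam * P / K = (P / 2) / (K / 2)"
      unfolding optimal_auth_def cE cardS cardM real_choose2 P_def K_def ..
    also have "\<dots> \<longleftrightarrow> real lam * P = P" using K by (simp add: field_simps)
    also have "\<dots> \<longleftrightarrow> lam = 1" using P by simp
    finally show ?thesis .
  qed
  show ?thesis using auth cardS cardM cardE_eq secrecy secure opt by blast
qed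
end
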